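(* Let $H$ be a complex Hilbert space, $\varphi,\psi:[0,1]\to\mathbb{R}$ continuous, and $A\in\mathbb{B}(H)$. Then: (1) if $\varphi\ne-\psi$ (i.e. $\varphi+\psi$ is not identically zero), then $\displaystyle\|\operatorname{Re}A\|\le\Big(\int_0^1|\varphi(t)+\psi(t)|\,dt\Big)^{-1}\int_0^1\omega_t(\varphi,\psi;A)\,dt$; (2) if $\varphi\ne\psi$, then $\displaystyle\|\operatorname{Im}A\|\le\Big(\int_0^1|\varphi(t)-\psi(t)|\,dt\Big)^{-1}\int_0^1\omega_t(\varphi,\psi;A)\,dt$; (3) if $|\varphi|\ne|\psi|$, then $\displaystyle\|A\|\le\Big[\Big(\int_0^1|\varphi(t)+\psi(t)|\,dt\Big)^{-1}+\Big(\int_0^1|\varphi(t)-\psi(t)|\,dt\Big)^{-1}\Big]\int_0^1\omega_t(\varphi,\psi;A)\,dt$.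
   Context: $\operatorname{Re}A=(A+A^* )/2$, $\operatorname{Im}A=(A-A^* )/(2i)$. $S_1(H)$ is the unit sphere of $H$ and $\omega_t(\varphi,\psi;A)=\sup_{x\in S_1(H)}|\langle(\varphi(t)A+\psi(t)A^* )x,x\rangle|$ for $t\in[0,1]$. *)

theory Defs
  imports "HOL-Analysis.Analysis"
begin

class complex_inner = real_normed_vector +
  fixes scaleC :: "complex \<Rightarrow> 'a \<Rightarrow> 'a"
    and cinner :: "'a \<Rightarrow> 'a \<Rightarrow> complex"
  assumes scaleC_add_right: "scaleC a (x + y) = scaleC a x + scaleC a y"
    and scaleC_add_left: "scaleC (a + b) x = scaleC a x + scaleC b x"
    and scaleC_scaleC: "scaleC a (scaleC b x) = scaleC (a * b) x"
    and scaleC_one: "scaleC 1 x = x"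
    and scaleR_scaleC: "scaleR r x = scaleC (complex_of_real r) x"
    and cinner_add_left: "cinner (x + y) z = cinner x z + cinner y z"
    and cinner_scaleC_left: "cinner (scaleC a x) y = a * cinner x y"
    and cinner_conj: "cinner y x = cnj (cinner x y)"
    and norm_cinner: "norm x = sqrt (Re (cinner x x))"

class complex_hilbert = complex_inner + complete_space

definition bounded_op :: "('a::complex_inner \<Rightarrow> 'a) \<Rightarrow> bool" where
  "bounded_op A \<longleftrightarrow> bounded_linear A \<and> (\<forall>c x. A (scaleC c x) = scaleC c (A x))"

definition is_adjoint :: "('a::complex_inner \<Rightarrow> 'a) \<Rightarrow> ('a \<Rightarrow> 'a) \<Rightarrow> bool" where
  "is_adjoint A B \<longleftrightarrow> (\<forall>x y. cinner (A x) y = cinner x (B y))"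

definition ReOp :: "('a::complex_inner \<Rightarrow> 'a) \<Rightarrow> ('a \<Rightarrow> 'a) \<Rightarrow> 'a \<Rightarrow> 'a" where
  "ReOp A B = (\<lambda>x. scaleC (1/2) (A x + B x))"

definition ImOp :: "('a::complex_inner \<Rightarrow> 'a) \<Rightarrow> ('a \<Rightarrow> 'a) \<Rightarrow> 'a \<Rightarrow> 'a" where
  "ImOp A B = (\<lambda>x. scaleC (1 / (2 * \<i>)) (A x - B x))"

text \<open>The value 0 is inserted so that the supremum over the empty sphere (H = {0}) is 0;
for nontrivial H this does not change the supremum (all values are nonnegative).\<close>
definition omega :: "(real \<Rightarrow> real) \<Rightarrow> (real \<Rightarrow> real) \<Rightarrow> ('a::complex_inner \<Rightarrow> 'a) \<Rightarrow> ('a \<Rightarrow> 'a) \<Rightarrow> real \<Rightarrow> real" where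
  "omega \<phi> \<psi> A B t =
     Sup (insert 0 ((\<lambda>x. cmod (cinner (scaleC (complex_of_real (\<phi> t)) (A x)
                                     + scaleC (complex_of_real (\<psi> t)) (B x)) x)) ` {x. norm x = 1}))"

end

theory Submission
  imports Defs "HOL-Analysis.Analysis"
begin


lemma cinner_add_right: "cinner x (y + z) = cinner x y + cinner x z"
  using cinner_conj[of x "y+z"] cinner_conj[of x y] cinner_conj[of x z] by (simp add: cinner_add_left)

lemma cinner_scaleC_right: "cinner x (scaleC a y) = cnj a * cinner x y"
  using cinner_conj[of x "scaleC a y"] cinner_conj[of x y] by (simp add: cinner_scaleC_left)

lemma scaleC_minus1: "scaleC (-1) x = - x"
proof -
  have "scaleR (-1) x = - x" by simp
  then show ?thesis using scaleR_scaleC[of "-1" x] by simp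
qed

lemma cinner_minus_left: "cinner (- x) y = - cinner x y"
  using cinner_scaleC_left[of "-1" x y] by (simp add: scaleC_minus1)

lemma cinner_minus_right: "cinner x (- y) = - cinner x y"
  using cinner_conj[of x "-y"] cinner_conj[of x y] by (simp add: cinner_minus_left)

lemma cinner_diff_left: "cinner (x - y) z = cinner x z - cinner y z"
  using cinner_add_left[of x "-y" z] by (simp add: cinner_minus_left)

lemma cinner_diff_right: "cinner x (y - z) = cinner x y - cinner x z"
  using cinner_add_right[of x y "-z"] by (simp add: cinner_minus_right)

lemma cinner_zero_left: "cinner 0 y = 0"
  using cinner_diff_left[of 0 0 y] by simp

lemma cinner_zero_right: "cinner x 0 = 0"
  using cinner_diff_right[of x 0 0] by simp

lemma cinner_self_real: "cinner x x = complex_of_real ((norm x)^2)"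
proof -
  have "Im (cinner x x) = Im (cnj (cinner x x))" using cinner_conj[of x x] by (rule arg_cong)
  then have "Im (cinner x x) = 0" by simp
  moreover have "Re (cinner x x) = (norm x)^2"
  proof -
    have h: "norm x = sqrt (Re (cinner x x))" by (rule norm_cinner)
    have "0 \<le> Re (cinner x x)"
    proof (rule ccontr)
      assume "\<not> 0 \<le> Re (cinner x x)"
      then have "sqrt (Re (cinner x x)) < 0" by simp
      then show False using h norm_ge_zero[of x] by linarith
    qed
    then show ?thesis using h by simp
  qed
  ultimately show ?thesis by (simp add: complex_eq_iff)
qed

lemma cinner_self_zero:
  assumes "cinner x x = 0" shows "x = 0"
proof -
  have "complex_of_real ((norm x)^2) = 0" using cinner_self_real[of x] assms by simp
  then have "norm x = 0" by simp
  then show ?thesis by simp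
qed

lemma cinner_ext: "(\<And>z. cinner z u = cinner z v) \<Longrightarrow> u = v"
proof -
  assume h: "\<And>z. cinner z u = cinner z v"
  have "cinner (u - v) (u - v) = 0" using h[of "u-v"] by (simp add: cinner_diff_right)
  then show "u = v" using cinner_self_zero[of "u-v"] by simp
qed

lemma cinner_scaleR_left: "cinner (scaleR r x) y = complex_of_real r * cinner x y"
  by (simp add: scaleR_scaleC cinner_scaleC_left)

lemma cinner_scaleR_right: "cinner x (scaleR r y) = complex_of_real r * cinner x y"
  by (simp add: scaleR_scaleC cinner_scaleC_right)



lemma norm_sq_cinner: "(norm (x::'a::complex_inner))^2 = Re (cinner x x)"
  using cinner_self_real[of x] by simp

lemma Re_cinner_sym: "Re (cinner (y::'a::complex_inner) x) = Re (cinner x y)"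
  using cinner_conj[of y x] by simp

lemma norm_sq_add: "(norm ((x::'a::complex_inner) + y))^2 = (norm x)^2 + (norm y)^2 + 2 * Re (cinner x y)"
  unfolding norm_sq_cinner using Re_cinner_sym[of y x]
  by (simp add: cinner_add_left cinner_add_right)

lemma norm_sq_diff: "(norm ((x::'a::complex_inner) - y))^2 = (norm x)^2 + (norm y)^2 - 2 * Re (cinner x y)"
  unfolding norm_sq_cinner using Re_cinner_sym[of y x]
  by (simp add: cinner_diff_left cinner_diff_right)

lemma adj_add:
  fixes A B :: "'a::complex_inner \<Rightarrow> 'a"
  assumes "is_adjoint A B" shows "B (x + y) = B x + B y"
  by (rule cinner_ext) (simp add: assms[unfolded is_adjoint_def, rule_format, symmetric] cinner_add_right)

lemma adj_scaleC:
  fixes A B :: "'a::complex_inner \<Rightarrow> 'a"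
  assumes "is_adjoint A B" shows "B (scaleC c x) = scaleC c (B x)"
  by (rule cinner_ext) (simp add: assms[unfolded is_adjoint_def, rule_format, symmetric] cinner_scaleC_right)

lemma adj_scaleR:
  fixes A B :: "'a::complex_inner \<Rightarrow> 'a"
  assumes "is_adjoint A B" shows "B (scaleR r x) = scaleR r (B x)"
  by (simp add: scaleR_scaleC adj_scaleC[OF assms])

lemma adj_diff:
  fixes A B :: "'a::complex_inner \<Rightarrow> 'a"
  assumes "is_adjoint A B" shows "B (x - y) = B x - B y"
  using adj_scaleR[OF assms, of "-1" y] adj_add[OF assms, of x "-y"] by simp

lemma sa_bound:
  fixes T :: "'a::complex_inner \<Rightarrow> 'a"
  assumes adj: "is_adjoint T T" and M: "0 \<le> M"
    and h: "\<And>x. norm x = 1 \<Longrightarrow> \<bar>Re (cinner (T x) x)\<bar> \<le> M"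
  shows "norm (T x) \<le> M * norm x"
proof -
  have T0: "T 0 = 0" using adj_scaleR[OF adj, of 0 0] by simp
  have q: "\<bar>Re (cinner (T u) u)\<bar> \<le> M * (norm u)^2" for u
  proof (cases "u = 0")
    case True then show ?thesis by (simp add: T0 cinner_zero_left)
  next
    case False
    define v where "v = (1 / norm u) *\<^sub>R u"
    have nv: "norm v = 1" using False by (simp add: v_def)
    have uv: "u = norm u *\<^sub>R v" using False by (simp add: v_def)
    have "cinner (T u) u = complex_of_real ((norm u)^2) * cinner (T v) v"
      by (subst (1 2) uv) (simp add: adj_scaleR[OF adj] cinner_scaleR_left cinner_scaleR_right power2_eq_square)
    then have "Re (cinner (T u) u) = (norm u)^2 * Re (cinner (T v) v)" by simp
    then have "\<bar>Re (cinner (T u) u)\<bar> = (norm u)^2 * \<bar>Re (cinner (T v) v)\<bar>" by (simp add: abs_mult)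
    also have "\<dots> \<le> (norm u)^2 * M" using h[OF nv] by (simp add: mult_left_mono)
    finally show ?thesis by (simp add: mult.commute)
  qed
  show ?thesis
  proof (cases "T x = 0")
    case True then show ?thesis using M by simp
  next
    case False
    then have x0: "x \<noteq> 0" using T0 by auto
    have nT: "norm (T x) > 0" using False by simp
    define y where "y = (norm x / norm (T x)) *\<^sub>R T x"
    have ny: "norm y = norm x" using nT by (simp add: y_def)
    have ry: "Re (cinner (T x) y) = norm x * norm (T x)"
      using nT by (simp add: y_def cinner_scaleR_right norm_sq_cinner[symmetric] power2_eq_square)
    have sym: "Re (cinner (T y) x) = Re (cinner (T x) y)"
      using adj[unfolded is_adjoint_def, rule_format, of y x] Re_cinner_sym[of y "T x"] by simp
    have e1: "Re (cinner (T (x + y)) (x + y)) = Re (cinner (T x) x) + Re (cinner (T y) y) + 2 * Re (cinner (T x) y)"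
      using sym by (simp add: adj_add[OF adj] cinner_add_left cinner_add_right)
    have e2: "Re (cinner (T (x - y)) (x - y)) = Re (cinner (T x) x) + Re (cinner (T y) y) - 2 * Re (cinner (T x) y)"
      using sym by (simp add: adj_diff[OF adj] cinner_diff_left cinner_diff_right)
    have "4 * (norm x * norm (T x)) = Re (cinner (T (x + y)) (x + y)) - Re (cinner (T (x - y)) (x - y))"
      using e1 e2 ry by simp
    also have "\<dots> \<le> M * (norm (x + y))^2 + M * (norm (x - y))^2"
      using q[of "x+y"] q[of "x-y"] by linarith
    also have "\<dots> = M * ((norm (x + y))^2 + (norm (x - y))^2)" by (simp add: algebra_simps)
    also have "(norm (x + y))^2 + (norm (x - y))^2 = 4 * (norm x)^2"
      using ny by (simp add: norm_sq_add norm_sq_diff)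
    also have "M * (4 * (norm x)^2) = 4 * (M * norm x * norm x)" by (simp add: power2_eq_square)
    finally have "norm x * norm (T x) \<le> norm x * (M * norm x)" by (simp add: mult.assoc mult.commute)
    then show ?thesis using x0 by (simp add: mult_le_cancel_left)
  qed
qed


lemma cinner_adj_self:
  fixes A B :: "'a::complex_inner \<Rightarrow> 'a"
  assumes "is_adjoint A B" shows "cinner (B x) x = cnj (cinner (A x) x)"
  using cinner_conj[of "B x" x] assms[unfolded is_adjoint_def, rule_format, of x x] by simp

lemma weak_cs: "cmod (cinner (u::'a::complex_inner) v) \<le> ((norm u)^2 + (norm v)^2) / 2"
proof (cases "cinner u v = 0")
  case True then show ?thesis by simp
next
  case False
  define c where "c = cinner u v"
  define \<alpha> where "\<alpha> = c / complex_of_real (cmod c)"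
  have c0: "cmod c > 0" using False c_def by simp
  have vu: "cinner v u = cnj c" using cinner_conj[of v u] c_def by simp
  have cc: "c * cnj c = complex_of_real (cmod c) * complex_of_real (cmod c)"
    by (simp add: complex_norm_square[symmetric] power2_eq_square)
  have r0: "complex_of_real (cmod c) \<noteq> 0" using c0 by simp
  have "cnj \<alpha> * c = (c * cnj c) / complex_of_real (cmod c)" by (simp add: \<alpha>_def)
  then have a1: "cnj \<alpha> * c = complex_of_real (cmod c)" using r0 by (simp add: cc)
  have "\<alpha> * cnj c = (c * cnj c) / complex_of_real (cmod c)" by (simp add: \<alpha>_def)
  then have a2: "\<alpha> * cnj c = complex_of_real (cmod c)" using r0 by (simp add: cc)
  have "\<alpha> * cnj \<alpha> = (c * cnj c) / (complex_of_real (cmod c) * complex_of_real (cmod c))" by (simp add: \<alpha>_def)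
  then have a3: "\<alpha> * cnj \<alpha> = 1" using r0 by (simp add: cc)
  have "cinner (u - scaleC \<alpha> v) (u - scaleC \<alpha> v)
     = cinner u u - cnj \<alpha> * c - \<alpha> * cinner v u + (\<alpha> * cnj \<alpha>) * cinner v v"
    by (simp add: cinner_diff_left cinner_diff_right cinner_scaleC_left cinner_scaleC_right c_def algebra_simps)
  also have "\<dots> = cinner u u + cinner v v - 2 * complex_of_real (cmod c)"
    using a1 a2 a3 vu by simp
  finally have "(norm (u - scaleC \<alpha> v))^2 = (norm u)^2 + (norm v)^2 - 2 * cmod c"
    by (simp add: norm_sq_cinner)
  moreover have "0 \<le> (norm (u - scaleC \<alpha> v))^2" by simp
  ultimately show ?thesis by (simp add: c_def)
qed

lemma norm_scaleC: "norm (scaleC c (y::'a::complex_inner)) = cmod c * norm y"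
proof -
  have "(norm (scaleC c y))^2 = (cmod c * norm y)^2"
    unfolding norm_sq_cinner
    apply (simp add: cinner_scaleC_left cinner_scaleC_right mult.assoc[symmetric] complex_mult_cnj power_mult_distrib norm_sq_cinner[symmetric])
    using cmod_power2[of c] by (simp add: power2_eq_square)
  then show ?thesis by (simp add: power2_eq_iff_nonneg)
qed

lemma scaleC_diff_right: "scaleC c ((u::'a::complex_inner) - v) = scaleC c u - scaleC c v"
proof -
  have "scaleC c (u - v) + scaleC c v = scaleC c u" by (simp add: scaleC_add_right[symmetric])
  then show ?thesis by (simp add: eq_diff_eq)
qed

definition G :: "('a \<Rightarrow> complex) \<Rightarrow> 'a set \<Rightarrow> real \<Rightarrow> real \<Rightarrow> real" where
  "G a S p q = Sup (insert 0 ((\<lambda>x. cmod (complex_of_real p * a x + complex_of_real q * cnj (a x))) ` S))"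

lemma G_bdd:
  assumes "\<And>x. x \<in> S \<Longrightarrow> cmod (a x) \<le> K"
  shows "bdd_above (insert 0 ((\<lambda>x. cmod (complex_of_real p * a x + complex_of_real q * cnj (a x))) ` S))"
proof (rule bdd_aboveI[where M = "max 0 ((\<bar>p\<bar> + \<bar>q\<bar>) * K)"])
  fix y assume "y \<in> insert 0 ((\<lambda>x. cmod (complex_of_real p * a x + complex_of_real q * cnj (a x))) ` S)"
  then consider "y = 0" | x where "x \<in> S" "y = cmod (complex_of_real p * a x + complex_of_real q * cnj (a x))" by auto
  then show "y \<le> max 0 ((\<bar>p\<bar> + \<bar>q\<bar>) * K)"
  proof cases
    case 2
    have "y \<le> cmod (complex_of_real p * a x) + cmod (complex_of_real q * cnj (a x))"
      using 2 norm_triangle_ineq by blast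
    also have "\<dots> = \<bar>p\<bar> * cmod (a x) + \<bar>q\<bar> * cmod (a x)" by (simp add: norm_mult)
    also have "\<dots> \<le> \<bar>p\<bar> * K + \<bar>q\<bar> * K"
      using assms[OF 2(1)] by (intro add_mono mult_left_mono) auto
    finally show ?thesis by (simp add: algebra_simps)
  qed simp
qed

lemma G_ge:
  assumes "\<And>x. x \<in> S \<Longrightarrow> cmod (a x) \<le> K" "x \<in> S"
  shows "cmod (complex_of_real p * a x + complex_of_real q * cnj (a x)) \<le> G a S p q"
  unfolding G_def by (rule cSup_upper[OF _ G_bdd[OF assms(1)]]) (use assms(2) in auto)

lemma G_nonneg:
  assumes "\<And>x. x \<in> S \<Longrightarrow> cmod (a x) \<le> K"
  shows "0 \<le> G a S p q"
  unfolding G_def by (rule cSup_upper[OF _ G_bdd[OF assms(1)]]) auto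

lemma G_lip:
  assumes K: "\<And>x. x \<in> S \<Longrightarrow> cmod (a x) \<le> K" and Kn: "0 \<le> K"
  shows "G a S p q \<le> G a S p' q' + (\<bar>p - p'\<bar> + \<bar>q - q'\<bar>) * K"
proof -
  have K0: "0 \<le> (\<bar>p - p'\<bar> + \<bar>q - q'\<bar>) * K"
    using Kn by (intro mult_nonneg_nonneg) auto
  show ?thesis unfolding G_def[of a S p q]
  proof (rule cSup_least)
    fix y assume "y \<in> insert 0 ((\<lambda>x. cmod (complex_of_real p * a x + complex_of_real q * cnj (a x))) ` S)"
    then consider "y = 0" | x where "x \<in> S" "y = cmod (complex_of_real p * a x + complex_of_real q * cnj (a x))" by auto
    then show "y \<le> G a S p' q' + (\<bar>p - p'\<bar> + \<bar>q - q'\<bar>) * K"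
    proof cases
      case 1
      show ?thesis proof -
        have "0 \<le> G a S p' q'" by (rule G_nonneg[OF K])
        then show ?thesis using 1 K0 by simp
      qed
    next
      case 2
      have eq: "complex_of_real p * a x + complex_of_real q * cnj (a x)
         = (complex_of_real p' * a x + complex_of_real q' * cnj (a x))
          + (complex_of_real (p - p') * a x + complex_of_real (q - q') * cnj (a x))"
        by (simp add: algebra_simps)
      have "y \<le> cmod (complex_of_real p' * a x + complex_of_real q' * cnj (a x))
          + cmod (complex_of_real (p - p') * a x + complex_of_real (q - q') * cnj (a x))"
        unfolding 2(2) eq by (rule norm_triangle_ineq)
      also have "\<dots> \<le> G a S p' q' + (\<bar>p - p'\<bar> + \<bar>q - q'\<bar>) * K"
      proof (rule add_mono)
        show "cmod (complex_of_real p' * a x + complex_of_real q' * cnj (a x)) \<le> G a S p' q'"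
          by (rule G_ge[OF K 2(1)])
        have e1: "cmod (complex_of_real p - complex_of_real p') = \<bar>p - p'\<bar>"
          by (simp only: of_real_diff[symmetric] norm_of_real)
        have e2: "cmod (complex_of_real q - complex_of_real q') = \<bar>q - q'\<bar>"
          by (simp only: of_real_diff[symmetric] norm_of_real)
        have "cmod (complex_of_real (p - p') * a x + complex_of_real (q - q') * cnj (a x))
            \<le> \<bar>p - p'\<bar> * cmod (a x) + \<bar>q - q'\<bar> * cmod (a x)"
          using norm_triangle_ineq[of "complex_of_real (p - p') * a x" "complex_of_real (q - q') * cnj (a x)"]
          using e1 e2 by (simp add: norm_mult)
        also have "\<dots> \<le> \<bar>p - p'\<bar> * K + \<bar>q - q'\<bar> * K"
          using K[OF 2(1)] by (intro add_mono mult_left_mono) auto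
        finally show "cmod (complex_of_real (p - p') * a x + complex_of_real (q - q') * cnj (a x))
            \<le> (\<bar>p - p'\<bar> + \<bar>q - q'\<bar>) * K" by (simp add: algebra_simps)
      qed
      finally show ?thesis .
    qed
  qed simp
qed

lemma G_cont:
  assumes K: "\<And>x. x \<in> S \<Longrightarrow> cmod (a x) \<le> K" and Kn: "0 \<le> K"
    and f: "continuous_on T f" and g: "continuous_on T g"
  shows "continuous_on T (\<lambda>t. G a S (f t) (g t))"
  unfolding continuous_on_def
proof (intro ballI)
  fix t assume t: "t \<in> T"
  let ?F = "at t within T"
  have lim: "((\<lambda>s. (\<bar>f s - f t\<bar> + \<bar>g s - g t\<bar>) * K) \<longlongrightarrow> (\<bar>f t - f t\<bar> + \<bar>g t - g t\<bar>) * K) ?F"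
    using f g t unfolding continuous_on_def by (intro tendsto_intros) auto
  have "((\<lambda>s. G a S (f s) (g s) - G a S (f t) (g t)) \<longlongrightarrow> 0) ?F"
  proof (rule Lim_null_comparison)
    show "\<forall>\<^sub>F s in ?F. norm (G a S (f s) (g s) - G a S (f t) (g t)) \<le> (\<bar>f s - f t\<bar> + \<bar>g s - g t\<bar>) * K"
    proof (rule always_eventually, rule allI)
      fix s
      have "G a S (f s) (g s) \<le> G a S (f t) (g t) + (\<bar>f s - f t\<bar> + \<bar>g s - g t\<bar>) * K"
        by (rule G_lip[OF K Kn])
      moreover have "G a S (f t) (g t) \<le> G a S (f s) (g s) + (\<bar>f t - f s\<bar> + \<bar>g t - g s\<bar>) * K"
        by (rule G_lip[OF K Kn])
      moreover have "\<bar>f t - f s\<bar> = \<bar>f s - f t\<bar>" "\<bar>g t - g s\<bar> = \<bar>g s - g t\<bar>" by auto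
      ultimately show "norm (G a S (f s) (g s) - G a S (f t) (g t)) \<le> (\<bar>f s - f t\<bar> + \<bar>g s - g t\<bar>) * K"
        by (simp add: abs_le_iff)
    qed
    show "((\<lambda>s. (\<bar>f s - f t\<bar> + \<bar>g s - g t\<bar>) * K) \<longlongrightarrow> 0) ?F" using lim by simp
  qed
  then show "((\<lambda>s. G a S (f s) (g s)) \<longlongrightarrow> G a S (f t) (g t)) ?F"
    by (rule LIM_zero_cancel)
qed

lemma int_abs_pos:
  fixes g :: "real \<Rightarrow> real"
  assumes "continuous_on {0..1} g" "t0 \<in> {0..1}" "g t0 \<noteq> 0"
  shows "integral {0..1} (\<lambda>t. \<bar>g t\<bar>) > 0"
proof -
  have c: "continuous_on {0..1} (\<lambda>t. \<bar>g t\<bar>)" using assms(1) by (intro continuous_intros)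
  have "integral {0..1} (\<lambda>t. \<bar>g t\<bar>) \<noteq> 0"
    using integral_eq_0_iff[OF c, of ] assms(2,3) by auto
  moreover have "integral {0..1} (\<lambda>t. \<bar>g t\<bar>) \<ge> 0"
    by (rule integral_nonneg) (auto intro: integrable_continuous_interval c)
  ultimately show ?thesis by simp
qed


lemma ReOp_adj:
  fixes A B :: "'a::complex_inner \<Rightarrow> 'a"
  assumes "is_adjoint A B" shows "is_adjoint (ReOp A B) (ReOp A B)"
  unfolding is_adjoint_def ReOp_def
proof (intro allI)
  fix x y
  have h1: "cinner (A x) y = cinner x (B y)" and h2: "cinner (B x) y = cinner x (A y)"
    using assms[unfolded is_adjoint_def, rule_format, of x y] apply simp
    using cinner_conj[of "B x" y] cinner_conj[of x "A y"] assms[unfolded is_adjoint_def, rule_format, of y x] by simp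
  show "cinner (scaleC (1 / 2) (A x + B x)) y = cinner x (scaleC (1 / 2) (A y + B y))"
    by (simp add: cinner_scaleC_left cinner_scaleC_right cinner_add_left cinner_add_right h1 h2)
qed

lemma ImOp_adj:
  fixes A B :: "'a::complex_inner \<Rightarrow> 'a"
  assumes "is_adjoint A B" shows "is_adjoint (ImOp A B) (ImOp A B)"
  unfolding is_adjoint_def ImOp_def
proof (intro allI)
  fix x y
  have h1: "cinner (A x) y = cinner x (B y)" and h2: "cinner (B x) y = cinner x (A y)"
    using assms[unfolded is_adjoint_def, rule_format, of x y] apply simp
    using cinner_conj[of "B x" y] cinner_conj[of x "A y"] assms[unfolded is_adjoint_def, rule_format, of y x] by simp
  have c: "cnj (1 / (2 * \<i>)) = - (1 / (2 * \<i>))" by (simp add: complex_eq_iff)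
  show "cinner (scaleC (1 / (2 * \<i>)) (A x - B x)) y = cinner x (scaleC (1 / (2 * \<i>)) (A y - B y))"
    unfolding cinner_scaleC_left cinner_scaleC_right c
    by (simp add: cinner_diff_left cinner_diff_right h1 h2 algebra_simps)
qed

lemma ReOp_val:
  fixes A B :: "'a::complex_inner \<Rightarrow> 'a"
  assumes "is_adjoint A B" shows "Re (cinner (ReOp A B x) x) = Re (cinner (A x) x)"
  unfolding ReOp_def by (simp add: cinner_scaleC_left cinner_add_left cinner_adj_self[OF assms])

lemma ImOp_val:
  fixes A B :: "'a::complex_inner \<Rightarrow> 'a"
  assumes "is_adjoint A B" shows "Re (cinner (ImOp A B x) x) = Im (cinner (A x) x)"
  unfolding ImOp_def by (simp add: cinner_scaleC_left cinner_diff_left cinner_adj_self[OF assms] Re_divide)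

lemma ReIm_decomp:
  fixes A B :: "'a::complex_inner \<Rightarrow> 'a"
  shows "A x = ReOp A B x + scaleC \<i> (ImOp A B x)"
proof -
  have "scaleC \<i> (ImOp A B x) = scaleC (1/2) (A x - B x)"
    unfolding ImOp_def by (simp add: scaleC_scaleC)
  then have "ReOp A B x + scaleC \<i> (ImOp A B x) = scaleC (1/2) (A x) + scaleC (1/2) (A x)"
    unfolding ReOp_def by (simp add: scaleC_add_right scaleC_diff_right)
  also have "\<dots> = A x" by (simp add: scaleC_add_left[symmetric] scaleC_one)
  finally show ?thesis by simp
qed

lemma omega_G:
  fixes A B :: "'a::complex_inner \<Rightarrow> 'a"
  assumes "is_adjoint A B"
  shows "omega \<phi> \<psi> A B t = G (\<lambda>x. cinner (A x) x) {x. norm x = 1} (\<phi> t) (\<psi> t)"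
  unfolding omega_def G_def
  by (simp add: cinner_add_left cinner_scaleC_left cinner_adj_self[OF assms])


theorem proposition2p9:
  fixes A Astar :: "'a::complex_hilbert \<Rightarrow> 'a"
    and \<phi> \<psi> :: "real \<Rightarrow> real"
  assumes "continuous_on {0..1} \<phi>" and "continuous_on {0..1} \<psi>"
    and "bounded_op A" and "is_adjoint A Astar"
  shows "((\<exists>t\<in>{0..1}. \<phi> t + \<psi> t \<noteq> 0) \<longrightarrow>
            onorm (ReOp A Astar) \<le>
              (1 / integral {0..1} (\<lambda>t. \<bar>\<phi> t + \<psi> t\<bar>)) * integral {0..1} (omega \<phi> \<psi> A Astar))
       \<and> ((\<exists>t\<in>{0..1}. \<phi> t \<noteq> \<psi> t) \<longrightarrow>
            onorm (ImOp A Astar) \<le>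
              (1 / integral {0..1} (\<lambda>t. \<bar>\<phi> t - \<psi> t\<bar>)) * integral {0..1} (omega \<phi> \<psi> A Astar))
       \<and> ((\<exists>t\<in>{0..1}. \<bar>\<phi> t\<bar> \<noteq> \<bar>\<psi> t\<bar>) \<longrightarrow>
            onorm A \<le>
              (1 / integral {0..1} (\<lambda>t. \<bar>\<phi> t + \<psi> t\<bar>) + 1 / integral {0..1} (\<lambda>t. \<bar>\<phi> t - \<psi> t\<bar>))
              * integral {0..1} (omega \<phi> \<psi> A Astar))"
proof -
  note phi = assms(1) and psi = assms(2) and adj = assms(4)
  have bl: "bounded_linear A" using assms(3) unfolding bounded_op_def by simp
  obtain K where K: "\<And>x. norm (A x) \<le> norm x * K"
    using bounded_linear.bounded[OF bl] by blast
  define a where "a = (\<lambda>x. cinner (A x) x)"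
  define S where "S = {x::'a. norm x = 1}"
  define K0 where "K0 = (K^2 + 1) / 2"
  have hK: "cmod (a x) \<le> K0" if "x \<in> S" for x
  proof -
    have nx: "norm x = 1" using that S_def by simp
    have "norm (A x) \<le> K" using K[of x] nx by simp
    then have "(norm (A x))^2 \<le> K^2" by (intro power_mono) auto
    then show ?thesis using weak_cs[of "A x" x] nx unfolding a_def K0_def by simp
  qed
  have K0n: "0 \<le> K0" unfolding K0_def using zero_le_power2[of K] by (simp add: add_nonneg_nonneg)
  define w where "w = omega \<phi> \<psi> A Astar"
  have wG: "w t = G a S (\<phi> t) (\<psi> t)" for t
    unfolding w_def a_def S_def by (rule omega_G[OF adj])
  have wc: "continuous_on {0..1} w"
    unfolding wG[abs_def] by (rule G_cont[OF hK K0n phi psi])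
  have wi: "w integrable_on {0..1}" by (rule integrable_continuous_interval[OF wc])
  define J where "J = integral {0..1} w"
  have J0: "0 \<le> J" unfolding J_def
    by (rule integral_nonneg[OF wi]) (simp add: wG G_nonneg[OF hK])
  define I1 where "I1 = integral {0..1} (\<lambda>t. \<bar>\<phi> t + \<psi> t\<bar>)"
  define I2 where "I2 = integral {0..1} (\<lambda>t. \<bar>\<phi> t - \<psi> t\<bar>)"
  have c1: "continuous_on {0..1} (\<lambda>t. \<bar>\<phi> t + \<psi> t\<bar>)" using phi psi by (intro continuous_intros)
  have c2: "continuous_on {0..1} (\<lambda>t. \<bar>\<phi> t - \<psi> t\<bar>)" using phi psi by (intro continuous_intros)
  have i1: "(\<lambda>t. \<bar>\<phi> t + \<psi> t\<bar>) integrable_on {0..1}" by (rule integrable_continuous_interval[OF c1])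
  have i2: "(\<lambda>t. \<bar>\<phi> t - \<psi> t\<bar>) integrable_on {0..1}" by (rule integrable_continuous_interval[OF c2])
  have val: "complex_of_real (\<phi> t) * a x + complex_of_real (\<psi> t) * cnj (a x)
      = complex_of_real ((\<phi> t + \<psi> t) * Re (a x)) + \<i> * complex_of_real ((\<phi> t - \<psi> t) * Im (a x))" for t x
    by (simp add: complex_eq_iff algebra_simps)
  have key1: "\<bar>Re (a x)\<bar> * I1 \<le> J" if "x \<in> S" for x
  proof -
    have "\<bar>Re (a x)\<bar> * \<bar>\<phi> t + \<psi> t\<bar> \<le> w t" for t
    proof -
      have "\<bar>Re (a x)\<bar> * \<bar>\<phi> t + \<psi> t\<bar> = \<bar>Re (complex_of_real (\<phi> t) * a x + complex_of_real (\<psi> t) * cnj (a x))\<bar>"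
        unfolding val by (simp add: abs_mult)
      also have "\<dots> \<le> cmod (complex_of_real (\<phi> t) * a x + complex_of_real (\<psi> t) * cnj (a x))"
        by (rule abs_Re_le_cmod)
      also have "\<dots> \<le> w t" unfolding wG by (rule G_ge[OF hK that])
      finally show ?thesis .
    qed
    then have "integral {0..1} (\<lambda>t. \<bar>Re (a x)\<bar> * \<bar>\<phi> t + \<psi> t\<bar>) \<le> J"
      unfolding J_def by (intro integral_le wi integrable_on_mult_right i1) auto
    moreover have "\<bar>Re (a x)\<bar> * I1 = integral {0..1} (\<lambda>t. \<bar>Re (a x)\<bar> * \<bar>\<phi> t + \<psi> t\<bar>)"
      unfolding I1_def by (rule integral_mult[OF i1])
    ultimately show ?thesis by linarith
  qed
  have key2: "\<bar>Im (a x)\<bar> * I2 \<le> J" if "x \<in> S" for x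
  proof -
    have "\<bar>Im (a x)\<bar> * \<bar>\<phi> t - \<psi> t\<bar> \<le> w t" for t
    proof -
      have "\<bar>Im (a x)\<bar> * \<bar>\<phi> t - \<psi> t\<bar> = \<bar>Im (complex_of_real (\<phi> t) * a x + complex_of_real (\<psi> t) * cnj (a x))\<bar>"
        unfolding val by (simp add: abs_mult)
      also have "\<dots> \<le> cmod (complex_of_real (\<phi> t) * a x + complex_of_real (\<psi> t) * cnj (a x))"
        by (rule abs_Im_le_cmod)
      also have "\<dots> \<le> w t" unfolding wG by (rule G_ge[OF hK that])
      finally show ?thesis .
    qed
    then have "integral {0..1} (\<lambda>t. \<bar>Im (a x)\<bar> * \<bar>\<phi> t - \<psi> t\<bar>) \<le> J"
      unfolding J_def by (intro integral_le wi integrable_on_mult_right i2) auto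
    moreover have "\<bar>Im (a x)\<bar> * I2 = integral {0..1} (\<lambda>t. \<bar>Im (a x)\<bar> * \<bar>\<phi> t - \<psi> t\<bar>)"
      unfolding I2_def by (rule integral_mult[OF i2])
    ultimately show ?thesis by linarith
  qed
  have P1: "norm (ReOp A Astar x) \<le> (1 / I1 * J) * norm x" if "I1 > 0" for x
  proof (rule sa_bound[OF ReOp_adj[OF adj]])
    show "0 \<le> 1 / I1 * J" using that J0 by simp
    fix y :: 'a assume "norm y = 1"
    then have "\<bar>Re (a y)\<bar> * I1 \<le> J" using key1 S_def by simp
    then show "\<bar>Re (cinner (ReOp A Astar y) y)\<bar> \<le> 1 / I1 * J"
      unfolding ReOp_val[OF adj] using that by (simp add: a_def field_simps)
  qed
  have P2: "norm (ImOp A Astar x) \<le> (1 / I2 * J) * norm x" if "I2 > 0" for x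
  proof (rule sa_bound[OF ImOp_adj[OF adj]])
    show "0 \<le> 1 / I2 * J" using that J0 by simp
    fix y :: 'a assume "norm y = 1"
    then have "\<bar>Im (a y)\<bar> * I2 \<le> J" using key2 S_def by simp
    then show "\<bar>Re (cinner (ImOp A Astar y) y)\<bar> \<le> 1 / I2 * J"
      unfolding ImOp_val[OF adj] using that by (simp add: a_def field_simps)
  qed
  have R1: "onorm (ReOp A Astar) \<le> 1 / I1 * J" if ex: "\<exists>t\<in>{0..1}. \<phi> t + \<psi> t \<noteq> 0"
  proof -
    obtain t where "t \<in> {0..1}" "\<phi> t + \<psi> t \<noteq> 0" using ex by blast
    then have pos: "I1 > 0" unfolding I1_def
      using int_abs_pos[of "\<lambda>t. \<phi> t + \<psi> t"] phi psi by (auto intro: continuous_intros)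
    show ?thesis by (rule onorm_bound) (use pos J0 P1[OF pos] in auto)
  qed
  have R2: "onorm (ImOp A Astar) \<le> 1 / I2 * J" if ex: "\<exists>t\<in>{0..1}. \<phi> t \<noteq> \<psi> t"
  proof -
    obtain t where "t \<in> {0..1}" "\<phi> t - \<psi> t \<noteq> 0" using ex by auto
    then have pos: "I2 > 0" unfolding I2_def
      using int_abs_pos[of "\<lambda>t. \<phi> t - \<psi> t"] phi psi by (auto intro: continuous_intros)
    show ?thesis by (rule onorm_bound) (use pos J0 P2[OF pos] in auto)
  qed
  have R3: "onorm A \<le> (1 / I1 + 1 / I2) * J" if ex: "\<exists>t\<in>{0..1}. \<bar>\<phi> t\<bar> \<noteq> \<bar>\<psi> t\<bar>"
  proof -
    obtain t where t: "t \<in> {0..1}" "\<bar>\<phi> t\<bar> \<noteq> \<bar>\<psi> t\<bar>" using ex by auto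
    then have "\<phi> t + \<psi> t \<noteq> 0" "\<phi> t - \<psi> t \<noteq> 0" by auto
    then have pos1: "I1 > 0" and pos2: "I2 > 0" unfolding I1_def I2_def
      using int_abs_pos[of "\<lambda>t. \<phi> t + \<psi> t"] int_abs_pos[of "\<lambda>t. \<phi> t - \<psi> t"] t(1) phi psi
      by (auto intro: continuous_intros)
    show ?thesis
    proof (rule onorm_bound)
      show "0 \<le> (1 / I1 + 1 / I2) * J" using pos1 pos2 J0 by simp
      fix x
      have "norm (A x) = norm (ReOp A Astar x + scaleC \<i> (ImOp A Astar x))"
        by (rule arg_cong[OF ReIm_decomp])
      also have "\<dots> \<le> norm (ReOp A Astar x) + norm (ImOp A Astar x)"
        using norm_triangle_ineq[of "ReOp A Astar x" "scaleC \<i> (ImOp A Astar x)"] by (simp add: norm_scaleC)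
      also have "\<dots> \<le> (1 / I1 * J) * norm x + (1 / I2 * J) * norm x"
        by (rule add_mono[OF P1[OF pos1] P2[OF pos2]])
      finally show "norm (A x) \<le> (1 / I1 + 1 / I2) * J * norm x" by (simp add: algebra_simps)
    qed
  qed
  show ?thesis using R1 R2 R3 unfolding I1_def I2_def J_def w_def by blast
qed

end
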